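(* Let $p=5$. The function $n\mapsto F(n)/\omega(3)^n$ extends to an analytic function on $\mathbb{Z}_5$, namely $$x\mapsto \frac{2}{\sqrt5}\sinh_5\!\left(x\log_5\frac{\phi}{\omega(3)}\right);$$ that is, this series converges for all $x\in\mathbb{Z}_5$ and at every integer $n\ge0$ it equals $F(n)/\omega(3)^n$.
   Context: $F(n)$ is the Fibonacci sequence ($F(0)=0,F(1)=1,F(n+2)=F(n+1)+F(n)$). $K=\mathbb{Q}_5(\phi)$ with $\phi$ a root of $x^2-x-1$ and $\sqrt5:=2\phi-1$; $\pi=\sqrt5$ is a uniformizer and the residue field of $\mathcal O_K$ has $5$ elements. $\omega(3)$ is the unique $4$th root of unity in $\mathcal O_K$ congruent to $3$ modulo $\sqrt5$ (equivalently, the $4$th root of unity in $\mathbb{Z}_5$ congruent to $3$ mod $5$). $\log_5 y=\sum_{m\ge1}(-1)^{m+1}(y-1)^m/m$ is the $5$-adic logarithm, $\exp_5 y=\sum_{m\ge0}y^m/m!$, and $\sinh_5(y)=\frac{\exp_5(y)-\exp_5(-y)}{2}=\sum_{m\ge0}\frac{y^{2m+1}}{(2m+1)!}$. *)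

theory Defs
  imports Complex_Main "HOL-Number_Theory.Fib"
begin

text \<open>The field K = Q_5(phi) is characterised (up to isometric isomorphism) as a field
  of characteristic 0 with an absolute value nrm that is non-archimedean, satisfies
  nrm 5 = 1/5 (so it restricts to the 5-adic absolute value on Q), is complete, and in which
  the elements of Q(phi) are dense, where phi^2 = phi + 1.\<close>

definition Kconv :: "('k::field_char_0 \<Rightarrow> real) \<Rightarrow> (nat \<Rightarrow> 'k) \<Rightarrow> 'k \<Rightarrow> bool" where
  "Kconv nrm s l \<longleftrightarrow> (\<forall>e>0. \<exists>N. \<forall>n\<ge>N. nrm (s n - l) < e)"

definition Kcauchy :: "('k::field_char_0 \<Rightarrow> real) \<Rightarrow> (nat \<Rightarrow> 'k) \<Rightarrow> bool" where
  "Kcauchy nrm s \<longleftrightarrow> (\<forall>e>0. \<exists>N. \<forall>m\<ge>N. \<forall>n\<ge>N. nrm (s m - s n) < e)"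

definition Ksums :: "('k::field_char_0 \<Rightarrow> real) \<Rightarrow> (nat \<Rightarrow> 'k) \<Rightarrow> 'k \<Rightarrow> bool" where
  "Ksums nrm f l \<longleftrightarrow> Kconv nrm (\<lambda>M. \<Sum>m<M. f m) l"

definition is_K5 :: "('k::field_char_0 \<Rightarrow> real) \<Rightarrow> 'k \<Rightarrow> bool" where
  "is_K5 nrm phi \<longleftrightarrow>
     (\<forall>x. nrm x \<ge> 0) \<and> (\<forall>x. nrm x = 0 \<longleftrightarrow> x = 0) \<and>
     (\<forall>x y. nrm (x * y) = nrm x * nrm y) \<and>
     (\<forall>x y. nrm (x + y) \<le> max (nrm x) (nrm y)) \<and>
     nrm 5 = 1 / 5 \<and>
     (\<forall>s. Kcauchy nrm s \<longrightarrow> (\<exists>l. Kconv nrm s l)) \<and>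
     phi ^ 2 = phi + 1 \<and>
     (\<forall>y. \<exists>a b :: nat \<Rightarrow> rat. Kconv nrm (\<lambda>n. of_rat (a n) + of_rat (b n) * phi) y)"

definition Z5 :: "('k::field_char_0 \<Rightarrow> real) \<Rightarrow> 'k set" where
  "Z5 nrm = {x. \<exists>s :: nat \<Rightarrow> int. Kconv nrm (\<lambda>n. of_int (s n)) x}"

text \<open>omega(3): the 4th root of unity congruent to 3 modulo sqrt 5 (i.e. nrm (w - 3) < 1).\<close>
definition omega3 :: "('k::field_char_0 \<Rightarrow> real) \<Rightarrow> 'k" where
  "omega3 nrm = (THE w. w ^ 4 = 1 \<and> nrm (w - 3) < 1)"

definition log_term :: "'k::field_char_0 \<Rightarrow> nat \<Rightarrow> 'k" where
  "log_term y m = (- 1) ^ (Suc m + 1) * (y - 1) ^ Suc m / of_nat (Suc m)"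

definition log5 :: "('k::field_char_0 \<Rightarrow> real) \<Rightarrow> 'k \<Rightarrow> 'k" where
  "log5 nrm y = (THE l. Ksums nrm (log_term y) l)"

definition sinh_term :: "'k::field_char_0 \<Rightarrow> nat \<Rightarrow> 'k" where
  "sinh_term y m = y ^ (2 * m + 1) / fact (2 * m + 1)"

definition sinh5 :: "('k::field_char_0 \<Rightarrow> real) \<Rightarrow> 'k \<Rightarrow> 'k" where
  "sinh5 nrm y = (THE l. Ksums nrm (sinh_term y) l)"

end

theory Submission
  imports Defs "HOL-Computational_Algebra.Polynomial_FPS"
begin

unbundle fps_syntax

definition theta :: real where "theta = root 4 (1/5)"

lemma theta_pos: "theta > 0" by (simp add: theta_def)
lemma theta_lt1: "theta < 1" by (simp add: theta_def)
lemma theta4: "theta ^ 4 = 1/5" unfolding theta_def by (simp add: real_root_pow_pos2)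
lemma theta_le1: "theta \<le> 1" using theta_lt1 by simp

lemma bez5: fixes u :: int assumes "\<not> 5 dvd u" shows "\<exists>a b. a * u + b * 5 = 1"
proof -
  define q where "q = u div 5"
  define r where "r = u mod 5"
  have u: "u = 5 * q + r" unfolding q_def r_def by simp
  have "r \<noteq> 0" using assms unfolding r_def by auto
  moreover have "0 \<le> r" "r < 5" unfolding r_def by auto
  ultimately have "r = 1 \<or> r = 2 \<or> r = 3 \<or> r = 4" by auto
  thus ?thesis
  proof (elim disjE)
    assume "r = 1" thus ?thesis using u by (intro exI[of _ 1] exI[of _ "-q"]) simp
  next
    assume "r = 2" thus ?thesis using u by (intro exI[of _ 3] exI[of _ "-(3*q+1)"]) simp
  next
    assume "r = 3" thus ?thesis using u by (intro exI[of _ 2] exI[of _ "-(2*q+1)"]) simp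
  next
    assume "r = 4" thus ?thesis using u by (intro exI[of _ 4] exI[of _ "-(4*q+3)"]) simp
  qed
qed

locale K5 =
  fixes nrm :: "'k::field_char_0 \<Rightarrow> real" and phi :: 'k
  assumes K: "is_K5 nrm phi"
begin

lemma nn[simp]: "nrm x \<ge> 0" using K unfolding is_K5_def by blast
lemma nz[simp]: "nrm x = 0 \<longleftrightarrow> x = 0" using K unfolding is_K5_def by blast
lemma nmult: "nrm (x * y) = nrm x * nrm y" using K unfolding is_K5_def by blast
lemma ultra: "nrm (x + y) \<le> max (nrm x) (nrm y)" using K unfolding is_K5_def by blast
lemma n5: "nrm 5 = 1/5" using K unfolding is_K5_def by blast
lemma complete: "Kcauchy nrm s \<Longrightarrow> \<exists>l. Kconv nrm s l" using K unfolding is_K5_def by blast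
lemma phi2: "phi ^ 2 = phi + 1" using K unfolding is_K5_def by blast

lemma n0[simp]: "nrm 0 = 0" by simp

lemma n1[simp]: "nrm 1 = 1"
proof -
  have "nrm 1 = nrm 1 * nrm 1" using nmult[of 1 1] by simp
  moreover have "nrm 1 \<noteq> 0" by simp
  ultimately show ?thesis by simp
qed

lemma nminus1: "nrm (-1) = 1"
proof -
  have "nrm (-1) * nrm (-1) = 1" using nmult[of "-1" "-1"] by simp
  hence "nrm (-1) ^ 2 = 1 ^ 2" by (simp add: power2_eq_square)
  thus ?thesis using power2_eq_imp_eq[of "nrm (-1)" 1] by simp
qed

lemma nminus[simp]: "nrm (- x) = nrm x"
  using nmult[of "-1" x] nminus1 by simp

lemma ndiff_comm: "nrm (x - y) = nrm (y - x)"
  using nminus[of "x - y"] by simp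

lemma npow[simp]: "nrm (x ^ n) = nrm x ^ n"
  by (induct n) (simp_all add: nmult)

lemma ninv: "nrm (inverse x) = inverse (nrm x)"
proof (cases "x = 0")
  case False
  hence h: "nrm x * nrm (inverse x) = 1" using nmult[of x "inverse x"] by simp
  have "nrm x \<noteq> 0" using False by simp
  thus ?thesis using h by (auto simp: field_simps)
qed simp

lemma ndiv: "nrm (x / y) = nrm x / nrm y"
  by (simp add: divide_inverse nmult ninv)

lemma ultra_diff: "nrm (x - y) \<le> max (nrm x) (nrm y)"
  using ultra[of x "- y"] by simp

lemma ntri: "nrm (x + y) \<le> nrm x + nrm y"
  using ultra[of x y] nn[of x] nn[of y] by linarith

lemma ultra_le: "nrm x \<le> B \<Longrightarrow> nrm y \<le> B \<Longrightarrow> nrm (x + y) \<le> B"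
  using ultra[of x y] by simp

lemma ultra_le_diff: "nrm x \<le> B \<Longrightarrow> nrm y \<le> B \<Longrightarrow> nrm (x - y) \<le> B"
  using ultra_diff[of x y] by simp

lemma nsum_le: "finite S \<Longrightarrow> B \<ge> 0 \<Longrightarrow> (\<And>i. i \<in> S \<Longrightarrow> nrm (f i) \<le> B) \<Longrightarrow> nrm (sum f S) \<le> B"
  by (induct S rule: finite_induct) (auto intro!: ultra_le)

lemma strict_ultra: "nrm y < nrm x \<Longrightarrow> nrm (x + y) = nrm x"
proof -
  assume a: "nrm y < nrm x"
  have 1: "nrm (x + y) \<le> nrm x" using ultra[of x y] a by simp
  have "nrm x \<le> max (nrm (x + y)) (nrm y)" using ultra[of "x + y" "- y"] by simp
  hence "nrm x \<le> nrm (x + y)" using a by auto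
  thus ?thesis using 1 by simp
qed

lemma nnat_le1: "nrm (of_nat n) \<le> 1"
  by (induct n) (auto intro!: ultra_le)

lemma nint_le1: "nrm (of_int n) \<le> 1"
proof (cases "n \<ge> 0")
  case True thus ?thesis using nnat_le1[of "nat n"] by simp
next
  case False thus ?thesis using nnat_le1[of "nat (- n)"]
  proof -
    have "(of_int n :: 'k) = - of_nat (nat (- n))" using False by simp
    thus ?thesis using nnat_le1[of "nat (- n)"] by simp
  qed
qed

lemma ncoprime: assumes "\<not> (5::int) dvd u" shows "nrm (of_int u) = 1"
proof -
  obtain a b where ab: "a * u + b * 5 = 1" using bez5[OF assms] by blast
  have "1 = nrm (of_int (a * u + b * 5) :: 'k)" using ab by simp
  also have "\<dots> = nrm (of_int a * of_int u + of_int b * 5)" by simp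
  also have "\<dots> \<le> max (nrm (of_int a * (of_int u::'k))) (nrm (of_int b * (5::'k)))" by (rule ultra)
  finally have 1: "1 \<le> max (nrm (of_int a :: 'k) * nrm (of_int u :: 'k)) (nrm (of_int b :: 'k) * (1/5))"
    by (simp add: nmult n5)
  have "nrm (of_int a :: 'k) * nrm (of_int u :: 'k) \<le> nrm (of_int u :: 'k)"
    using nint_le1[of a] by (simp add: mult_left_le_one_le)
  moreover have "nrm (of_int b :: 'k) * (1/5) < 1" using nint_le1[of b] by simp
  ultimately have "1 \<le> nrm (of_int u :: 'k)" using 1 by linarith
  thus ?thesis using nint_le1[of u] by simp
qed

lemma ncoprime_nat: assumes "\<not> (5::nat) dvd u" shows "nrm (of_nat u) = 1"
proof -
  have "\<not> (5::int) dvd int u" using assms by presburger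
  from ncoprime[OF this] show ?thesis by simp
qed

lemma n2[simp]: "nrm 2 = 1" using ncoprime_nat[of 2] by simp
lemma n3[simp]: "nrm 3 = 1" using ncoprime_nat[of 3] by simp
lemma n4[simp]: "nrm 4 = 1" using ncoprime_nat[of 4] by simp
lemma n6[simp]: "nrm 6 = 1" using ncoprime_nat[of 6] by simp

lemma nnat_lower: "m \<ge> 1 \<Longrightarrow> nrm (of_nat m :: 'k) \<ge> theta ^ (m - 1)"
proof (induct m rule: less_induct)
  case (less m)
  show ?case
  proof (cases "5 dvd m")
    case False
    thus ?thesis using ncoprime_nat[OF False] theta_pos theta_le1 by (simp add: power_le_one)
  next
    case True
    then obtain j where j: "m = 5 * j" by blast
    with less have j1: "j \<ge> 1" "j < m" by auto
    have "nrm (of_nat m :: 'k) = nrm (5::'k) * nrm (of_nat j :: 'k)" using j by (simp add: nmult)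
    also have "\<dots> = theta ^ 4 * nrm (of_nat j :: 'k)" by (simp add: n5 theta4)
    also have "\<dots> \<ge> theta ^ 4 * theta ^ (j - 1)"
      using less(1)[OF j1(2) j1(1)] theta_pos by (simp add: mult_left_mono)
    finally have a: "nrm (of_nat m :: 'k) \<ge> theta ^ (4 + (j - 1))" by (simp add: power_add)
    have "theta ^ (m - 1) \<le> theta ^ (4 + (j - 1))"
      using j j1 theta_pos theta_le1 by (intro power_decreasing) auto
    thus ?thesis using a by linarith
  qed
qed

lemma nfact_block: "r < 5 \<Longrightarrow> nrm (fact (5 * j + r) :: 'k) = nrm (fact (5 * j) :: 'k)"
proof (induct r)
  case (Suc r)
  have "\<not> 5 dvd Suc (5 * j + r)" using Suc(2) by presburger
  hence "nrm (of_nat (Suc (5 * j + r)) :: 'k) = 1" by (rule ncoprime_nat)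
  hence "nrm (fact (Suc (5 * j + r)) :: 'k) = nrm (fact (5 * j + r) :: 'k)"
    by (simp add: fact_Suc nmult del: of_nat_Suc)
  thus ?case using Suc by simp
qed simp

lemma nfact5: "nrm (fact (5 * j) :: 'k) = theta ^ (4 * j) * nrm (fact j :: 'k)"
proof (induct j)
  case (Suc j)
  have e: "5 * Suc j = Suc (5 * j + 4)" by simp
  have "fact (5 * Suc j) = (of_nat (Suc (5 * j + 4)) :: 'k) * fact (5 * j + 4)"
    by (simp only: e fact_Suc)
  also have "(of_nat (Suc (5 * j + 4)) :: 'k) = of_nat (5 * Suc j)" by (simp only: e)
  finally have "fact (5 * Suc j) = (of_nat (5 * Suc j) :: 'k) * fact (5 * j + 4)" .
  moreover have "(of_nat (5 * Suc j) :: 'k) = 5 * of_nat (Suc j)" by (simp only: of_nat_mult of_nat_numeral)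
  ultimately have "fact (5 * Suc j) = (5 * of_nat (Suc j) :: 'k) * fact (5 * j + 4)" by simp
  hence "nrm (fact (5 * Suc j) :: 'k) = nrm (5 * of_nat (Suc j) :: 'k) * nrm (fact (5 * j) :: 'k)"
    using nfact_block[of 4 j] by (simp only: nmult)
  also have "\<dots> = theta ^ 4 * nrm (of_nat (Suc j) :: 'k) * (theta ^ (4 * j) * nrm (fact j :: 'k))"
    using Suc by (simp add: nmult n5 theta4 del: of_nat_Suc)
  also have "\<dots> = theta ^ (4 * Suc j) * nrm (fact (Suc j) :: 'k)"
    by (simp add: fact_Suc nmult power_add algebra_simps del: of_nat_Suc)
  finally show ?case .
qed simp

lemma nfact_lower: "nrm (fact k :: 'k) \<ge> theta ^ k"
proof (induct k rule: less_induct)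
  case (less k)
  show ?case
  proof (cases "k = 0")
    case True thus ?thesis by simp
  next
    case False
    define j where "j = k div 5"
    define r where "r = k mod 5"
    have k: "k = 5 * j + r" "r < 5" unfolding j_def r_def by auto
    have jk: "j < k" using False unfolding j_def by simp
    have "nrm (fact k :: 'k) = theta ^ (4 * j) * nrm (fact j :: 'k)"
      using k nfact_block[of r j] nfact5[of j] by simp
    also have "\<dots> \<ge> theta ^ (4 * j) * theta ^ j"
      using less(1)[OF jk] theta_pos by (simp add: mult_left_mono)
    finally have a: "nrm (fact k :: 'k) \<ge> theta ^ (4 * j) * theta ^ j" .
    have "theta ^ k \<le> theta ^ (4 * j + j)"
      using k theta_pos theta_le1 by (intro power_decreasing) auto
    hence "theta ^ k \<le> theta ^ (4 * j) * theta ^ j" by (simp only: power_add)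
    thus ?thesis using a by linarith
  qed
qed

end

context K5 begin

lemma Kconv_iff: "Kconv nrm s l \<longleftrightarrow> (\<lambda>n. nrm (s n - l)) \<longlonglongrightarrow> 0"
  unfolding Kconv_def LIMSEQ_iff by simp

lemma null_cmp: fixes g b :: "nat \<Rightarrow> real"
  assumes "eventually (\<lambda>n. g n \<le> b n) sequentially" "\<And>n. g n \<ge> 0" "b \<longlonglongrightarrow> 0"
  shows "g \<longlonglongrightarrow> 0"
  by (rule real_tendsto_sandwich[of "\<lambda>n. 0" g sequentially b]) (use assms in auto)

lemma Kconv_bound:
  assumes "\<And>n. nrm (s n - l) \<le> b n" "b \<longlonglongrightarrow> 0" shows "Kconv nrm s l"
  unfolding Kconv_iff
  by (rule null_cmp[OF _ _ assms(2)]) (use assms(1) in simp_all)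

lemma Kconv_bound_ev:
  assumes "eventually (\<lambda>n. nrm (s n - l) \<le> b n) sequentially" "b \<longlonglongrightarrow> 0" shows "Kconv nrm s l"
  unfolding Kconv_iff
  by (rule null_cmp[OF assms(1) _ assms(2)]) simp

lemma Kconv_unique: assumes "Kconv nrm s a" "Kconv nrm s b" shows "a = b"
proof -
  have "\<forall>e>0. nrm (a - b) < e"
  proof (intro allI impI)
    fix e :: real assume e: "e > 0"
    obtain N1 where N1: "\<forall>n\<ge>N1. nrm (s n - a) < e" using assms(1) e unfolding Kconv_def by blast
    obtain N2 where N2: "\<forall>n\<ge>N2. nrm (s n - b) < e" using assms(2) e unfolding Kconv_def by blast
    have "nrm (a - b) = nrm ((s (max N1 N2) - b) - (s (max N1 N2) - a))" by (simp add: algebra_simps)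
    also have "\<dots> \<le> max (nrm (s (max N1 N2) - b)) (nrm (s (max N1 N2) - a))" by (rule ultra_diff)
    also have "\<dots> < e" using N1 N2 by simp
    finally show "nrm (a - b) < e" .
  qed
  show ?thesis
  proof (rule ccontr)
    assume "a \<noteq> b"
    hence "nrm (a - b) \<noteq> 0" by simp
    hence "nrm (a - b) > 0" using nn[of "a - b"] by linarith
    with \<open>\<forall>e>0. nrm (a - b) < e\<close> show False by auto
  qed
qed

lemma Ksums_unique: "Ksums nrm f a \<Longrightarrow> Ksums nrm f b \<Longrightarrow> a = b"
  unfolding Ksums_def by (rule Kconv_unique)

lemma Kconv_const: "Kconv nrm (\<lambda>n. c) c" unfolding Kconv_iff by simp

lemma Kconv_add: assumes "Kconv nrm s a" "Kconv nrm t b" shows "Kconv nrm (\<lambda>n. s n + t n) (a + b)"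
proof (rule Kconv_bound)
  show "nrm (s n + t n - (a + b)) \<le> nrm (s n - a) + nrm (t n - b)" for n
    using ntri[of "s n - a" "t n - b"] by (simp add: algebra_simps)
  show "(\<lambda>n. nrm (s n - a) + nrm (t n - b)) \<longlonglongrightarrow> 0"
    using assms unfolding Kconv_iff by (simp add: tendsto_add_zero)
qed

lemma Kconv_minus: assumes "Kconv nrm s a" shows "Kconv nrm (\<lambda>n. - s n) (- a)"
proof -
  have "nrm (- s n - - a) = nrm (s n - a)" for n
  proof -
    have "- s n - - a = - (s n - a)" by simp
    thus ?thesis by (simp only: nminus)
  qed
  thus ?thesis using assms unfolding Kconv_iff by simp
qed

lemma Kconv_diff: assumes "Kconv nrm s a" "Kconv nrm t b" shows "Kconv nrm (\<lambda>n. s n - t n) (a - b)"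
  using Kconv_add[OF assms(1) Kconv_minus[OF assms(2)]] by simp

lemma Kconv_mult: assumes "Kconv nrm s a" "Kconv nrm t b" shows "Kconv nrm (\<lambda>n. s n * t n) (a * b)"
proof (rule Kconv_bound)
  fix n
  have "s n * t n - a * b = (s n - a) * (t n - b) + (s n - a) * b + a * (t n - b)"
    by (simp add: algebra_simps)
  hence "nrm (s n * t n - a * b) \<le> nrm ((s n - a) * (t n - b)) + nrm ((s n - a) * b) + nrm (a * (t n - b))"
    using ntri[of "(s n - a) * (t n - b) + (s n - a) * b" "a * (t n - b)"]
      ntri[of "(s n - a) * (t n - b)" "(s n - a) * b"] by simp
  thus "nrm (s n * t n - a * b) \<le> nrm (s n - a) * nrm (t n - b) + nrm (s n - a) * nrm b + nrm a * nrm (t n - b)"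
    by (simp add: nmult)
next
  have 1: "(\<lambda>n. nrm (s n - a)) \<longlonglongrightarrow> 0" "(\<lambda>n. nrm (t n - b)) \<longlonglongrightarrow> 0" using assms unfolding Kconv_iff by auto
  show "(\<lambda>n. nrm (s n - a) * nrm (t n - b) + nrm (s n - a) * nrm b + nrm a * nrm (t n - b)) \<longlonglongrightarrow> 0"
    using tendsto_add[OF tendsto_add[OF tendsto_mult[OF 1] tendsto_mult[OF 1(1) tendsto_const]] tendsto_mult[OF tendsto_const 1(2)]]
    by simp
qed

lemma Kconv_power: assumes "Kconv nrm s a" shows "Kconv nrm (\<lambda>n. s n ^ k) (a ^ k)"
  by (induct k) (simp_all add: Kconv_const Kconv_mult[OF assms])

lemma Kconv_close: assumes "Kconv nrm s a" "(\<lambda>n. nrm (t n - s n)) \<longlonglongrightarrow> 0" shows "Kconv nrm t a"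
proof (rule Kconv_bound)
  show "nrm (t n - a) \<le> nrm (t n - s n) + nrm (s n - a)" for n
    using ntri[of "t n - s n" "s n - a"] by simp
  show "(\<lambda>n. nrm (t n - s n) + nrm (s n - a)) \<longlonglongrightarrow> 0"
    using assms unfolding Kconv_iff by (simp add: tendsto_add_zero)
qed

lemma Kconv_subseq: assumes "Kconv nrm s a" "strict_mono r" shows "Kconv nrm (\<lambda>n. s (r n)) a"
  using assms LIMSEQ_subseq_LIMSEQ[of "\<lambda>n. nrm (s n - a)" 0 r] unfolding Kconv_iff by (simp add: o_def)

lemma Kconv_norm_le: assumes "Kconv nrm s l" "\<And>n. nrm (s n) \<le> B" shows "nrm l \<le> B"
proof (rule ccontr)
  assume "\<not> nrm l \<le> B"
  hence "nrm l - B > 0" by simp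
  then obtain N where N: "nrm (s N - l) < nrm l - B" using assms(1) unfolding Kconv_def by blast
  have "nrm l = nrm ((l - s N) + s N)" by simp
  also have "\<dots> \<le> max (nrm (l - s N)) (nrm (s N))" by (rule ultra)
  also have "\<dots> < nrm l" using N assms(2)[of N] ndiff_comm[of l "s N"] nn[of "s N"] nn[of "s N - l"]
    by (simp only: max_less_iff_conj) (intro conjI; linarith)
  finally show False by simp
qed

lemma Ksums_exists: assumes "(\<lambda>n. nrm (f n)) \<longlonglongrightarrow> 0" shows "\<exists>l. Ksums nrm f l"
proof -
  have "Kcauchy nrm (\<lambda>M. \<Sum>m<M. f m)"
    unfolding Kcauchy_def
  proof (intro allI impI)
    fix e :: real assume e: "e > 0"
    have "e / 2 > 0" using e by simp
    then obtain N where N0: "\<forall>n\<ge>N. norm (nrm (f n) - 0) < e / 2" using assms unfolding LIMSEQ_iff by blast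
    have N: "\<forall>n\<ge>N. nrm (f n) < e / 2" using N0 by simp
    have key: "nrm ((\<Sum>m<b. f m) - (\<Sum>m<a. f m)) < e" if "N \<le> a" "a \<le> b" for a b
    proof -
      have u: "{..<b} = {..<a} \<union> {a..<b}" using that by auto
      have "(\<Sum>m<b. f m) = (\<Sum>m<a. f m) + (\<Sum>m\<in>{a..<b}. f m)"
        unfolding u by (rule sum.union_disjoint) auto
      hence "(\<Sum>m<b. f m) - (\<Sum>m<a. f m) = (\<Sum>m\<in>{a..<b}. f m)" by simp
      moreover have "nrm (\<Sum>m\<in>{a..<b}. f m) \<le> e / 2"
      proof (rule nsum_le)
        fix i assume "i \<in> {a..<b}"
        hence "i \<ge> N" using that by auto
        thus "nrm (f i) \<le> e / 2" using N by (simp add: less_imp_le)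
      qed (use e in auto)
      ultimately show ?thesis using e by simp
    qed
    show "\<exists>N. \<forall>m\<ge>N. \<forall>n\<ge>N. nrm ((\<Sum>m<m. f m) - (\<Sum>m<n. f m)) < e"
    proof (intro exI allI impI)
      fix m n assume "N \<le> m" "N \<le> n"
      show "nrm ((\<Sum>m<m. f m) - (\<Sum>m<n. f m)) < e"
      proof (cases "n \<le> m")
        case True thus ?thesis using key \<open>N \<le> n\<close> by blast
      next
        case False
        have "nrm ((\<Sum>m<m. f m) - (\<Sum>m<n. f m)) = nrm ((\<Sum>m<n. f m) - (\<Sum>m<m. f m))"
          by (rule ndiff_comm)
        thus ?thesis using key[of m n] \<open>N \<le> m\<close> False by simp
      qed
    qed
  qed
  thus ?thesis using complete unfolding Ksums_def by blast
qed

end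


lemma pow5_id: fixes b e P :: int
  shows "(b + 5 * (P * e)) ^ 5 - b ^ 5 = 25 * P * (e * (b^4 + 10*b^3*(P*e) + 50*b^2*(P*e)^2 + 125*b*(P*e)^3 + 125*(P*e)^4))"
  by (simp add: algebra_simps power2_eq_square power3_eq_cube power4_eq_xxxx numeral_eq_Suc)

lemma pow5_step: fixes a b :: int assumes "5 ^ Suc j dvd a - b"
  shows "5 ^ Suc (Suc j) dvd a ^ 5 - b ^ 5"
proof -
  obtain e where e: "a - b = 5 ^ Suc j * e" using assms by (auto simp: dvd_def)
  define c where "c = 5 ^ j * e"
  have a: "a = b + 5 * c" using e unfolding c_def by simp
  have "a ^ 5 - b ^ 5 = 5 ^ Suc (Suc j) * (e * (b^4 + 10*b^3*c + 50*b^2*c^2 + 125*b*c^3 + 125*c^4))"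
    unfolding a c_def using pow5_id[of b "5^j" e] by simp
  thus ?thesis by simp
qed

definition tt :: "nat \<Rightarrow> int" where "tt n = 3 ^ (5 ^ n)"

lemma tt_Suc: "tt (Suc n) = tt n ^ 5"
  unfolding tt_def by (simp add: power_mult[symmetric] mult.commute)

lemma tt_step: "5 ^ Suc n dvd tt (Suc n) - tt n"
proof (induct n)
  case 0
  have "tt (Suc 0) - tt 0 = 5 * 48" by (simp add: tt_def)
  thus ?case by simp
next
  case (Suc n)
  have e1: "tt (Suc (Suc n)) = tt (Suc n) ^ 5" by (rule tt_Suc)
  have e2: "tt (Suc n) ^ 5 - tt n ^ 5 = tt (Suc (Suc n)) - tt (Suc n)"
    unfolding e1 by (simp only: tt_Suc[of n])
  show ?case using pow5_step[OF Suc] unfolding e2 .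
qed

lemma tt_cauchy: "n \<le> m \<Longrightarrow> 5 ^ Suc n dvd tt m - tt n"
proof (induct m rule: dec_induct)
  case (step m)
  have "5 ^ Suc n dvd (5::int) ^ Suc m" using \<open>n \<le> m\<close> by (intro le_imp_power_dvd) simp
  hence "5 ^ Suc n dvd tt (Suc m) - tt m" using tt_step[of m] by (rule dvd_trans)
  hence "5 ^ Suc n dvd (tt (Suc m) - tt m) + (tt m - tt n)" using step(3) by (rule dvd_add)
  thus ?case by simp
qed simp

lemma tt_mod: "\<not> 5 dvd tt n"
proof
  assume a: "5 dvd tt n"
  have "5 dvd tt n - 3" using tt_cauchy[of 0 n] by (simp add: tt_def)
  hence "(5::int) dvd tt n - (tt n - 3)" using dvd_diff[OF a] by blast
  hence "(5::int) dvd 3" by simp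
  thus False by simp
qed

context K5 begin

lemma ndvd5: fixes x :: int assumes "5 ^ k dvd x" shows "nrm (of_int x :: 'k) \<le> (1/5) ^ k"
proof -
  obtain d where "x = 5 ^ k * d" using assms by (auto simp: dvd_def)
  hence "nrm (of_int x :: 'k) = (1/5) ^ k * nrm (of_int d :: 'k)" by (simp add: nmult n5)
  thus ?thesis using nint_le1[of d] by (simp add: mult_left_le_one_le)
qed

lemma omega_exists: "\<exists>w. w ^ 4 = (1::'k) \<and> nrm (w - 3) < 1"
proof -
  define s where "s n = (of_int (tt n) :: 'k)" for n
  have bd: "nrm (s m - s n) \<le> (1/5) ^ Suc n" if "n \<le> m" for m n
    using ndvd5[OF tt_cauchy[OF that]] unfolding s_def by simp
  have "Kcauchy nrm s"
    unfolding Kcauchy_def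
  proof (intro allI impI)
    fix e :: real assume e: "e > 0"
    obtain N where N: "(1/5::real) ^ N < e" using real_arch_pow_inv[OF e, of "1/5"] by auto
    show "\<exists>N. \<forall>m\<ge>N. \<forall>n\<ge>N. nrm (s m - s n) < e"
    proof (intro exI allI impI)
      fix m n assume mn: "N \<le> m" "N \<le> n"
      have p: "(1/5::real) ^ Suc k \<le> (1/5) ^ N" if "N \<le> k" for k
        using that by (intro power_decreasing) auto
      show "nrm (s m - s n) < e"
      proof (cases "n \<le> m")
        case True thus ?thesis using bd[OF True] p[OF mn(2)] N by linarith
      next
        case False
        hence "nrm (s n - s m) \<le> (1/5) ^ Suc m" using bd by simp
        moreover have "nrm (s m - s n) = nrm (s n - s m)" by (rule ndiff_comm)
        ultimately show ?thesis using p[OF mn(1)] N by linarith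
      qed
    qed
  qed
  then obtain w where w: "Kconv nrm s w" using complete by blast
  have "Kconv nrm (\<lambda>n. s n ^ 4) (w ^ 4)" by (rule Kconv_power[OF w])
  moreover have "Kconv nrm (\<lambda>n. s n ^ 4) 1"
  proof (rule Kconv_bound)
    fix n
    have "nrm (s n) = 1" unfolding s_def using ncoprime[OF tt_mod] .
    moreover have "s (Suc n) - s n = s n * (s n ^ 4 - 1)"
    proof -
      have "s (Suc n) = s n ^ 5" unfolding s_def by (simp add: tt_Suc)
      also have "\<dots> = s n * s n ^ 4" by (simp add: numeral_eq_Suc)
      finally show ?thesis by (simp add: algebra_simps)
    qed
    ultimately have "nrm (s n ^ 4 - 1) = nrm (s (Suc n) - s n)" by (simp add: nmult)
    thus "nrm (s n ^ 4 - 1) \<le> (1/5) ^ Suc n" using bd[of n "Suc n"] by simp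
  next
    show "(\<lambda>n. (1/5::real) ^ Suc n) \<longlonglongrightarrow> 0"
      by (rule LIMSEQ_Suc[OF LIMSEQ_power_zero]) simp
  qed
  ultimately have w4: "w ^ 4 = 1" by (rule Kconv_unique)
  have "\<exists>N. \<forall>n\<ge>N. nrm (s n - w) < 1" using w unfolding Kconv_def by simp
  then obtain N where "\<forall>n\<ge>N. nrm (s n - w) < 1" by blast
  hence N: "nrm (s N - w) < 1" by simp
  have "nrm (s N - 3) \<le> (1/5) ^ 1"
    using ndvd5[of 1 "tt N - 3"] tt_cauchy[of 0 N] unfolding s_def by (simp add: tt_def)
  hence "nrm (s N - 3) < 1" by simp
  moreover have "w - 3 = (s N - 3) - (s N - w)" by simp
  ultimately have "nrm (w - 3) < 1" using ultra_diff[of "s N - 3" "s N - w"] N by simp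
  with w4 show ?thesis by blast
qed

lemma omega_sq: assumes "w ^ 4 = (1::'k)" "nrm (w - 3) < 1" shows "w ^ 2 = -1"
proof -
  have "nrm (w - 1) = 1"
  proof -
    have "w - 1 = 2 + (w - 3)" by simp
    thus ?thesis using strict_ultra[of "w - 3" 2] assms(2) by simp
  qed
  moreover have "nrm (w + 1) = 1"
  proof -
    have "w + 1 = 4 + (w - 3)" by simp
    thus ?thesis using strict_ultra[of "w - 3" 4] assms(2) by (simp add: add.commute)
  qed
  moreover have "(w - 1) * (w + 1) * (w ^ 2 + 1) = w ^ 4 - 1"
    by (simp add: algebra_simps power2_eq_square power4_eq_xxxx)
  ultimately have "nrm (w ^ 2 + 1) = nrm (w ^ 4 - 1)" by (metis nmult mult_1 )
  hence "w ^ 2 + 1 = 0" using assms(1) by simp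
  thus ?thesis by (simp add: eq_neg_iff_add_eq_0)
qed

lemma omega_unique: assumes "w ^ 4 = (1::'k)" "nrm (w - 3) < 1" "v ^ 4 = 1" "nrm (v - 3) < 1"
  shows "w = v"
proof -
  have "(w - v) * (w + v) = w ^ 2 - v ^ 2" by (simp add: algebra_simps power2_eq_square)
  also have "\<dots> = 0" using omega_sq[OF assms(1,2)] omega_sq[OF assms(3,4)] by simp
  finally have 0: "(w - v) * (w + v) = 0" .
  have 1: "nrm ((w - 3) + (v - 3)) < 1" using ultra[of "w - 3" "v - 3"] assms(2,4) by linarith
  have e: "w + v = 6 + ((w - 3) + (v - 3))" by algebra
  have "nrm (6 + ((w - 3) + (v - 3))) = nrm (6::'k)" by (rule strict_ultra) (use 1 in simp)
  hence "nrm (w + v) = 1" unfolding e by simp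
  hence "w + v \<noteq> 0" by auto
  thus ?thesis using 0 by simp
qed

lemma omega: "omega3 nrm ^ 4 = 1 \<and> nrm (omega3 nrm - 3) < 1"
proof -
  obtain w where w: "w ^ 4 = (1::'k) \<and> nrm (w - 3) < 1" using omega_exists by blast
  have "\<exists>!w. w ^ 4 = (1::'k) \<and> nrm (w - 3) < 1" using w omega_unique by blast
  thus ?thesis unfolding omega3_def by (rule theI')
qed

lemma omega_sq': "omega3 nrm ^ 2 = -1" using omega omega_sq by blast

lemma omega_norm3: "nrm (omega3 nrm - 3) = 1/5"
proof -
  let ?w = "omega3 nrm"
  have "nrm (?w + 3) = 1"
  proof -
    have e: "?w + 3 = 6 + (?w - 3)" by algebra
    have "nrm (6 + (?w - 3)) = nrm (6::'k)" by (rule strict_ultra) (use omega in simp)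
    thus ?thesis unfolding e by simp
  qed
  moreover have eq: "(?w - 3) * (?w + 3) = - (2 * 5)"
    using omega_sq' by (simp add: algebra_simps power2_eq_square)
  have "nrm ((?w - 3) * (?w + 3)) = nrm (- (2 * (5::'k)))" using eq by (rule arg_cong)
  hence "nrm (?w - 3) * nrm (?w + 3) = 1 / 5" by (simp only: nmult nminus n2 n5)
  ultimately show ?thesis by simp
qed

lemma omega_norm: "nrm (omega3 nrm) = 1"
proof -
  have e: "omega3 nrm = 3 + (omega3 nrm - 3)" by algebra
  have "nrm (3 + (omega3 nrm - 3)) = nrm (3::'k)" by (rule strict_ultra) (use omega in simp)
  thus ?thesis using e by simp
qed

end


lemma theta_sq_lt: "theta ^ 2 < theta"
  using theta_pos theta_lt1 by (simp add: power2_eq_square)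
lemma theta4_le2: "theta ^ 4 \<le> theta ^ 2"
  using theta_pos theta_le1 by (intro power_decreasing) auto

context K5 begin

definition "sq5 = 2 * phi - 1"
definition "yy = phi / omega3 nrm"
definition "LL = log5 nrm yy"

lemma sq5_sq: "sq5 ^ 2 = 5"
proof -
  have "sq5 ^ 2 = 4 * phi ^ 2 - 4 * phi + 1" unfolding sq5_def by (simp add: algebra_simps power2_eq_square)
  thus ?thesis using phi2 by simp
qed

lemma sq5_norm: "nrm sq5 = theta ^ 2"
proof -
  have "nrm sq5 ^ 2 = (theta ^ 2) ^ 2"
    using arg_cong[OF sq5_sq, of nrm] by (simp add: n5 theta4 flip: power_mult)
  thus ?thesis by (rule power2_eq_imp_eq) auto
qed

lemma omega_nz: "omega3 nrm \<noteq> 0" using omega_norm by auto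

lemma phi_omega: "nrm (phi - omega3 nrm) \<le> theta ^ 2"
proof -
  let ?w = "omega3 nrm"
  have e: "2 * (phi - ?w) = (sq5 - 5) + 2 * (3 - ?w)" unfolding sq5_def by algebra
  have a: "nrm (sq5 - 5) \<le> theta ^ 2"
    by (rule ultra_le_diff) (use sq5_norm n5 theta4 theta4_le2 in auto)
  have c: "nrm (3 - ?w) = 1/5" using omega_norm3 ndiff_comm[of ?w 3] by simp
  have "nrm (2 * (3 - ?w)) = nrm 2 * nrm (3 - ?w)" by (rule nmult)
  also have "\<dots> = theta ^ 4" by (simp only: c n2 theta4)
  finally have b: "nrm (2 * (3 - ?w)) \<le> theta ^ 2" using theta4_le2 by simp
  have "nrm (2 * (phi - ?w)) \<le> theta ^ 2" unfolding e by (rule ultra_le[OF a b])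
  moreover have "nrm (2 * (phi - ?w)) = nrm (phi - ?w)" by (simp only: nmult n2 mult_1)
  ultimately show ?thesis by simp
qed

lemma zz_norm: "nrm (yy - 1) \<le> theta ^ 2"
proof -
  have "yy - 1 = (phi - omega3 nrm) / omega3 nrm" unfolding yy_def using omega_nz by (simp add: field_simps)
  thus ?thesis using phi_omega omega_norm by (simp add: ndiv)
qed

lemma yy_nz: "yy \<noteq> 0"
proof
  assume "yy = 0"
  hence "nrm (yy - 1) = 1" by simp
  thus False using zz_norm theta_sq_lt theta_lt1 by linarith
qed

lemma exp_term_bound: assumes "nrm w \<le> theta ^ 2" shows "nrm (w ^ k / fact k) \<le> theta ^ k"
proof -
  have f: "nrm (fact k :: 'k) \<ge> theta ^ k" by (rule nfact_lower)
  have fp: "theta ^ k > 0" using theta_pos by simp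
  have "nrm (w ^ k / fact k) = nrm w ^ k / nrm (fact k :: 'k)" by (simp add: ndiv)
  also have "\<dots> \<le> (theta ^ 2) ^ k / theta ^ k"
    using assms f fp by (intro frac_le power_mono) auto
  also have "\<dots> = theta ^ k" using fp by (simp add: power2_eq_square power_mult_distrib)
  finally show ?thesis .
qed

lemma exp_conv: assumes "nrm w \<le> theta ^ 2" shows "\<exists>e. Ksums nrm (\<lambda>k. w ^ k / fact k) e"
proof (rule Ksums_exists)
  show "(\<lambda>k. nrm (w ^ k / fact k)) \<longlonglongrightarrow> 0"
    by (rule null_cmp[of _ "\<lambda>k. theta ^ k"]) (use exp_term_bound[OF assms] theta_pos theta_lt1 in
       \<open>auto intro: LIMSEQ_power_zero\<close>)
qed

lemma log_term_bound: "nrm (log_term yy m) \<le> theta ^ (m + 2)"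
proof -
  have l: "nrm (of_nat (Suc m) :: 'k) \<ge> theta ^ m" using nnat_lower[of "Suc m"] by simp
  have fp: "theta ^ m > 0" using theta_pos by simp
  have "nrm (log_term yy m) = nrm (yy - 1) ^ Suc m / nrm (of_nat (Suc m) :: 'k)"
    unfolding log_term_def by (simp add: ndiv nmult nminus1 del: of_nat_Suc)
  also have "\<dots> \<le> (theta ^ 2) ^ Suc m / theta ^ m"
    using zz_norm l fp by (intro frac_le power_mono) auto
  also have "\<dots> = theta ^ (m + 2)" using fp by (simp add: power2_eq_square power_mult_distrib power_add)
  finally show ?thesis .
qed

lemma log_term_bound2: "nrm (log_term yy m) \<le> theta ^ 2"
  using log_term_bound[of m] power_decreasing[of 2 "m+2" theta] theta_pos theta_le1 by auto

lemma log_conv: "\<exists>l. Ksums nrm (log_term yy) l"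
proof (rule Ksums_exists)
  show "(\<lambda>k. nrm (log_term yy k)) \<longlonglongrightarrow> 0"
  proof (rule null_cmp[of _ "\<lambda>k. theta ^ (k + 2)"])
    show "(\<lambda>k. theta ^ (k + 2)) \<longlonglongrightarrow> 0"
      using LIMSEQ_power_zero[of theta] theta_pos theta_lt1 LIMSEQ_ignore_initial_segment[of "\<lambda>k. theta ^ k" 0 2]
      by simp
  qed (use log_term_bound in auto)
qed

lemma LL_sums: "Ksums nrm (log_term yy) LL"
proof -
  obtain l where l: "Ksums nrm (log_term yy) l" using log_conv by blast
  have "\<exists>!l. Ksums nrm (log_term yy) l" using l Ksums_unique by blast
  thus ?thesis unfolding LL_def log5_def by (rule theI')
qed

lemma partial_log_norm: "nrm (\<Sum>m<N. log_term yy m) \<le> theta ^ 2"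
  by (rule nsum_le) (use log_term_bound2 in auto)

lemma LL_norm: "nrm LL \<le> theta ^ 2"
  using LL_sums partial_log_norm unfolding Ksums_def by (rule Kconv_norm_le)

end

context K5 begin

definition gb :: "'k fps \<Rightarrow> real \<Rightarrow> bool" where
  "gb F B \<longleftrightarrow> (\<forall>j. nrm (F $ j) * theta ^ j \<le> B)"

lemma gbD: "gb F B \<Longrightarrow> nrm (F $ j) \<le> B / theta ^ j"
  unfolding gb_def using theta_pos by (simp add: field_simps)

lemma gbI: "(\<And>j. nrm (F $ j) \<le> B / theta ^ j) \<Longrightarrow> gb F B"
  unfolding gb_def using theta_pos by (simp add: field_simps)

lemma gb_mono: "gb F A \<Longrightarrow> A \<le> B \<Longrightarrow> gb F B"
  unfolding gb_def by (meson order_trans)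

lemma gb_mult: assumes "gb F A" "gb G B" "A \<ge> 0" "B \<ge> 0" shows "gb (F * G) (A * B)"
proof (rule gbI)
  fix n
  have "nrm ((F * G) $ n) = nrm (\<Sum>i=0..n. F$i * G$(n - i))" by (simp add: fps_mult_nth)
  also have "\<dots> \<le> A * B / theta ^ n"
  proof (rule nsum_le)
    fix i assume i: "i \<in> {0..n}"
    have "nrm (F$i * G$(n - i)) = nrm (F$i) * nrm (G$(n-i))" by (rule nmult)
    also have "\<dots> \<le> (A / theta ^ i) * (B / theta ^ (n - i))"
      using gbD[OF assms(1)] gbD[OF assms(2)] assms theta_pos by (intro mult_mono) auto
    also have "\<dots> = A * B / (theta ^ i * theta ^ (n - i))" by simp
    also have "theta ^ i * theta ^ (n - i) = theta ^ n" using i by (simp flip: power_add)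
    finally show "nrm (F$i * G$(n - i)) \<le> A * B / theta ^ n" .
  qed (use assms theta_pos in auto)
  finally show "nrm ((F * G) $ n) \<le> A * B / theta ^ n" .
qed

lemma gb_one: "gb 1 1"
  unfolding gb_def by (auto simp: mult_le_one theta_pos theta_le1 power_le_one)

lemma gb_power: assumes "gb F B" "B \<ge> 0" shows "gb (F ^ k) (B ^ k)"
proof (induct k)
  case (Suc k)
  have "gb (F * F ^ k) (B * B ^ k)" by (rule gb_mult[OF assms(1) Suc assms(2)]) (use assms(2) in simp)
  thus ?case by simp
qed (simp add: gb_one)

lemma gb_const_mult: assumes "gb F B" shows "gb (fps_const c * F) (nrm c * B)"
  using assms unfolding gb_def
  by (simp add: nmult mult.assoc mult_left_mono)

lemma gb_sum: assumes "finite S" "B \<ge> 0" "\<And>i. i \<in> S \<Longrightarrow> gb (F i) B" shows "gb (\<Sum>i\<in>S. F i) B"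
proof (rule gbI)
  fix j
  have "nrm ((\<Sum>i\<in>S. F i) $ j) = nrm (\<Sum>i\<in>S. F i $ j)" by (simp add: fps_sum_nth)
  also have "\<dots> \<le> B / theta ^ j"
    by (rule nsum_le) (use assms gbD theta_pos in auto)
  finally show "nrm ((\<Sum>i\<in>S. F i) $ j) \<le> B / theta ^ j" .
qed

definition "AA = fps_ln (1::'k)"

lemma AA_nth: "AA $ j = (if j = 0 then 0 else (- 1) ^ (j - 1) / of_nat j)"
  unfolding AA_def by (simp add: fps_ln_nth)

lemma AA_coeff_bound: "j \<ge> 1 \<Longrightarrow> nrm ((- 1) ^ (j - 1) / (of_nat j :: 'k)) \<le> theta / theta ^ j"
proof -
  assume j: "j \<ge> 1"
  have l: "nrm (of_nat j :: 'k) \<ge> theta ^ (j - 1)" by (rule nnat_lower[OF j])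
  have tp: "theta ^ (j - 1) > 0" using theta_pos by simp
  have np: "nrm (of_nat j :: 'k) > 0" using l tp by linarith
  have "nrm ((- 1) ^ (j - 1) / (of_nat j :: 'k)) = 1 / nrm (of_nat j :: 'k)" by (simp add: ndiv nminus1)
  also have "\<dots> \<le> 1 / theta ^ (j - 1)" using l tp np by (intro divide_left_mono) auto
  also have "\<dots> = theta / theta ^ j" using j theta_pos
    by (cases j) (auto simp: field_simps)
  finally show ?thesis .
qed

lemma gb_AA: "gb AA theta"
  by (rule gbI) (use AA_coeff_bound theta_pos in \<open>auto simp: AA_nth\<close>)

definition "GG c = fps_exp c oo AA"

lemma exp_coef_bound: assumes "nrm c \<le> 1" shows "nrm (c ^ i / of_nat (fact i) :: 'k) \<le> 1 / theta ^ i"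
proof -
  have "nrm (c ^ i / of_nat (fact i) :: 'k) = nrm c ^ i / nrm (fact i :: 'k)" by (simp add: ndiv)
  also have "\<dots> \<le> 1 / theta ^ i"
    using nfact_lower[of i] theta_pos assms by (intro frac_le) (auto simp: power_le_one)
  finally show ?thesis .
qed

lemma gb_term: assumes "nrm c \<le> 1" "gb F (theta ^ i)"
  shows "gb (fps_const (c ^ i / of_nat (fact i)) * F) 1"
proof -
  have "gb (fps_const (c ^ i / of_nat (fact i)) * F) (nrm (c ^ i / of_nat (fact i) :: 'k) * theta ^ i)"
    by (rule gb_const_mult[OF assms(2)])
  moreover have "nrm (c ^ i / of_nat (fact i) :: 'k) * theta ^ i \<le> 1"
    using exp_coef_bound[OF assms(1), of i] theta_pos by (simp add: field_simps)
  ultimately show ?thesis by (rule gb_mono)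
qed

lemma GG_nth: "GG c $ j = (\<Sum>i\<in>{0..j}. fps_const (c ^ i / of_nat (fact i)) * AA ^ i) $ j"
  unfolding GG_def fps_compose_nth by (simp add: fps_sum_nth)

lemma gb_GG: assumes "nrm c \<le> 1" shows "gb (GG c) 1"
proof (rule gbI)
  fix j
  have "gb (\<Sum>i\<in>{0..j}. fps_const (c ^ i / of_nat (fact i)) * AA ^ i) 1"
    by (rule gb_sum) (use gb_term[OF assms gb_power[OF gb_AA]] theta_pos in auto)
  from gbD[OF this, of j] show "nrm (GG c $ j) \<le> 1 / theta ^ j" by (simp add: GG_nth)
qed

lemma AA0: "AA $ 0 = 0" by (simp add: AA_nth)

lemma GG_add: "GG (c + d) = GG c * GG d"
  unfolding GG_def fps_exp_add_mult by (rule fps_compose_mult_distrib[OF AA0])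

lemma GG_0: "GG 0 = 1" unfolding GG_def by simp

lemma GG_1: "GG 1 = 1 + fps_X"
proof -
  have "AA = fps_inv (fps_exp 1 - 1)" unfolding AA_def by (rule fps_ln_fps_exp_inv) simp
  hence "(fps_exp 1 - 1) oo AA = fps_X" using fps_inv_right[of "fps_exp (1::'k) - 1"] by simp
  hence "(fps_exp 1 oo AA) - 1 = fps_X" by (simp add: fps_compose_sub_distrib)
  thus ?thesis unfolding GG_def by (simp add: algebra_simps)
qed

end

context K5 begin

lemma gterm_bound: assumes "gb G 1" "nrm z \<le> theta ^ 2" shows "nrm (G $ j * z ^ j) \<le> theta ^ j"
proof -
  have "nrm (G $ j * z ^ j) = nrm (G $ j) * nrm z ^ j" by (simp add: nmult)
  also have "\<dots> \<le> (1 / theta ^ j) * (theta ^ 2) ^ j"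
    using gbD[OF assms(1), of j] assms(2) theta_pos by (intro mult_mono power_mono) auto
  also have "\<dots> = theta ^ j" using theta_pos by (simp add: power2_eq_square power_mult_distrib)
  finally show ?thesis .
qed

lemma gterm_bound2: assumes "gb G 1" "gb H 1" "nrm z \<le> theta ^ 2"
  shows "nrm (G $ i * H $ k * z ^ (i + k)) \<le> theta ^ (i + k)"
proof -
  have "G $ i * H $ k * z ^ (i + k) = (G $ i * z ^ i) * (H $ k * z ^ k)" by (simp add: power_add algebra_simps)
  hence "nrm (G $ i * H $ k * z ^ (i + k)) = nrm (G $ i * z ^ i) * nrm (H $ k * z ^ k)" by (simp only: nmult)
  also have "\<dots> \<le> theta ^ i * theta ^ k"
    using gterm_bound[OF assms(1,3)] gterm_bound[OF assms(2,3)] theta_pos by (intro mult_mono) auto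
  finally show ?thesis by (simp add: power_add)
qed

lemma fsum_mult:
  assumes G: "gb G 1" and H: "gb H 1" and z: "nrm z \<le> theta ^ 2"
    and a: "Ksums nrm (\<lambda>j. G $ j * z ^ j) a" and b: "Ksums nrm (\<lambda>j. H $ j * z ^ j) b"
  shows "Ksums nrm (\<lambda>j. (G * H) $ j * z ^ j) (a * b)"
proof -
  define f where "f = (\<lambda>(i, k). G $ i * H $ k * z ^ (i + k))"
  have prod: "(\<Sum>j<N. G $ j * z ^ j) * (\<Sum>j<N. H $ j * z ^ j) = sum f ({..<N} \<times> {..<N})" for N
    unfolding f_def sum_product sum.cartesian_product[symmetric]
    by (intro sum.cong refl) (simp add: power_add algebra_simps)
  have tri: "(\<Sum>j<N. (G * H) $ j * z ^ j) = sum f {(i, k). i + k < N}" for N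
  proof -
    have "sum f {(i, k). i + k < N} = (\<Sum>n<N. \<Sum>i\<le>n. G $ i * H $ (n - i) * z ^ (i + (n - i)))"
      unfolding f_def by (rule sum.triangle_reindex)
    also have "\<dots> = (\<Sum>n<N. (G * H) $ n * z ^ n)"
      by (intro sum.cong refl) (simp add: fps_mult_nth sum_distrib_right atLeast0AtMost)
    finally show ?thesis by simp
  qed
  have bd: "nrm ((\<Sum>j<N. G $ j * z ^ j) * (\<Sum>j<N. H $ j * z ^ j) - (\<Sum>j<N. (G * H) $ j * z ^ j)) \<le> theta ^ N" for N
  proof -
    have sub: "{(i, k). i + k < N} \<subseteq> {..<N} \<times> {..<N}" by auto
    have "sum f ({..<N} \<times> {..<N}) = sum f ({..<N} \<times> {..<N} - {(i, k). i + k < N}) + sum f {(i, k). i + k < N}"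
      by (rule sum.subset_diff[OF sub]) simp
    hence e: "(\<Sum>j<N. G $ j * z ^ j) * (\<Sum>j<N. H $ j * z ^ j) - (\<Sum>j<N. (G * H) $ j * z ^ j)
        = sum f ({..<N} \<times> {..<N} - {(i, k). i + k < N})" unfolding prod tri by simp
    show ?thesis unfolding e
    proof (rule nsum_le)
      fix p assume p: "p \<in> {..<N} \<times> {..<N} - {(i, k). i + k < N}"
      obtain i k where ik: "p = (i, k)" by (cases p)
      have "N \<le> i + k" using p ik by auto
      hence "theta ^ (i + k) \<le> theta ^ N" using theta_pos theta_le1 by (intro power_decreasing) auto
      thus "nrm (f p) \<le> theta ^ N" using gterm_bound2[OF G H z, of i k] unfolding ik f_def by simp
    qed (use theta_pos in auto)
  qed
  have "Kconv nrm (\<lambda>N. (\<Sum>j<N. G $ j * z ^ j) * (\<Sum>j<N. H $ j * z ^ j)) (a * b)"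
    using Kconv_mult[OF a[unfolded Ksums_def] b[unfolded Ksums_def]] .
  thus ?thesis unfolding Ksums_def
  proof (rule Kconv_close)
    show "(\<lambda>N. nrm ((\<Sum>j<N. (G * H) $ j * z ^ j) - (\<Sum>j<N. G $ j * z ^ j) * (\<Sum>j<N. H $ j * z ^ j))) \<longlonglongrightarrow> 0"
    proof (rule null_cmp[of _ "\<lambda>N. theta ^ N"])
      show "\<forall>\<^sub>F N in sequentially. nrm ((\<Sum>j<N. (G * H) $ j * z ^ j) - (\<Sum>j<N. G $ j * z ^ j) * (\<Sum>j<N. H $ j * z ^ j)) \<le> theta ^ N"
        using bd ndiff_comm by (simp only:) (rule always_eventually, simp)
    qed (use theta_pos theta_lt1 in \<open>auto intro: LIMSEQ_power_zero\<close>)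
  qed
qed

end

context K5 begin

definition "qq N = (\<Sum>m<N. monom (AA $ Suc m) (Suc m))"

lemma poly_qq: "poly (qq N) (yy - 1) = (\<Sum>m<N. log_term yy m)"
  unfolding qq_def poly_sum
proof (intro sum.cong refl)
  fix m
  have "(- 1 :: 'k) ^ (Suc m + 1) = (- 1) ^ m" by (simp add: power_add)
  thus "poly (monom (AA $ Suc m) (Suc m)) (yy - 1) = log_term yy m"
    unfolding poly_monom log_term_def AA_nth by (simp del: of_nat_Suc power_Suc)
qed

lemma coeff_qq: "coeff (qq N) i = (if i \<le> N then AA $ i else 0)"
proof (cases i)
  case 0 thus ?thesis unfolding qq_def coeff_sum by (simp add: AA0)
next
  case (Suc i')
  have "coeff (qq N) i = (\<Sum>m<N. if m = i' then AA $ Suc m else 0)"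
    unfolding qq_def coeff_sum Suc by (intro sum.cong refl) auto
  also have "\<dots> = (if i' \<in> {..<N} then AA $ Suc i' else 0)" by (rule sum.delta) simp
  finally show ?thesis using Suc by auto
qed

lemma qq_agree: "i \<le> N \<Longrightarrow> fps_of_poly (qq N) $ i = AA $ i"
  by (simp add: coeff_qq)

lemma gb_qq: "gb (fps_of_poly (qq N)) theta"
  by (rule gbI) (use gbD[OF gb_AA] theta_pos in \<open>auto simp: coeff_qq\<close>)

lemma agree_power: assumes "\<And>i. i \<le> N \<Longrightarrow> F $ i = H $ i" "j \<le> N"
  shows "(F ^ k) $ j = (H ^ k) $ j"
  using assms(2)
proof (induct k arbitrary: j)
  case (Suc k)
  have "(F ^ Suc k) $ j = (\<Sum>i=0..j. F $ i * (F ^ k) $ (j - i))" by (simp add: fps_mult_nth)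
  also have "\<dots> = (\<Sum>i=0..j. H $ i * (H ^ k) $ (j - i))"
    using Suc assms(1) by (intro sum.cong refl) auto
  also have "\<dots> = (H ^ Suc k) $ j" by (simp add: fps_mult_nth)
  finally show ?case .
qed simp

lemma AA_power_low: "j < k \<Longrightarrow> (AA ^ k) $ j = 0"
proof -
  assume jk: "j < k"
  obtain B where B: "AA = fps_X * B" unfolding AA_def using fps_X_dvd_fps_ln by (metis dvdE)
  have "AA ^ k = fps_X ^ k * B ^ k" unfolding B by (simp add: power_mult_distrib)
  thus ?thesis using jk by (simp add: fps_X_power_mult_nth)
qed

lemma powdiff: assumes "nrm x \<le> r" "nrm y \<le> r" "r \<ge> 0"
  shows "nrm (x ^ Suc k - y ^ Suc k) \<le> nrm (x - y) * r ^ k"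
proof (induct k)
  case (Suc k)
  have e: "x ^ Suc (Suc k) - y ^ Suc (Suc k) = x * (x ^ Suc k - y ^ Suc k) + (x - y) * y ^ Suc k"
    by (simp add: algebra_simps)
  have 1: "nrm (x * (x ^ Suc k - y ^ Suc k)) \<le> nrm (x - y) * r ^ Suc k"
  proof -
    have "nrm (x * (x ^ Suc k - y ^ Suc k)) = nrm x * nrm (x ^ Suc k - y ^ Suc k)" by (rule nmult)
    also have "\<dots> \<le> r * (nrm (x - y) * r ^ k)" using Suc assms by (intro mult_mono) auto
    finally show ?thesis by (simp add: algebra_simps)
  qed
  have 2: "nrm ((x - y) * y ^ Suc k) \<le> nrm (x - y) * r ^ Suc k"
    using assms by (simp only: nmult npow) (intro mult_left_mono power_mono, auto)
  show ?case unfolding e by (rule ultra_le[OF 1 2])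
qed simp

lemma exp_diff_term: assumes "nrm c \<le> 1" "nrm L \<le> theta ^ 2" "nrm P \<le> theta ^ 2"
  shows "nrm ((c * L) ^ k / fact k - (c * P) ^ k / fact k) \<le> nrm (L - P) / theta"
proof (cases k)
  case 0 thus ?thesis using theta_pos by simp
next
  case (Suc k')
  have "nrm c * nrm L \<le> 1 * theta ^ 2" by (rule mult_mono) (use assms in auto)
  hence x: "nrm (c * L) \<le> theta ^ 2" by (simp add: nmult)
  have "nrm c * nrm P \<le> 1 * theta ^ 2" by (rule mult_mono) (use assms in auto)
  hence y: "nrm (c * P) \<le> theta ^ 2" by (simp add: nmult)
  have "c * L - c * P = c * (L - P)" by (simp add: algebra_simps)
  hence "nrm (c * L - c * P) = nrm c * nrm (L - P)" by (simp add: nmult)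
  also have "\<dots> \<le> nrm (L - P)" by (rule mult_left_le_one_le) (use assms in auto)
  finally have d: "nrm (c * L - c * P) \<le> nrm (L - P)" .
  have "(c * L) ^ k / fact k - (c * P) ^ k / fact k = ((c * L) ^ k - (c * P) ^ k) / fact k"
    by (simp add: diff_divide_distrib)
  hence "nrm ((c * L) ^ k / fact k - (c * P) ^ k / fact k) = nrm ((c * L) ^ k - (c * P) ^ k) / nrm (fact k :: 'k)"
    by (simp add: ndiv)
  also have "\<dots> \<le> (nrm (L - P) * (theta ^ 2) ^ k') / theta ^ k"
  proof (rule frac_le)
    have "nrm ((c * L) ^ k - (c * P) ^ k) \<le> nrm (c * L - c * P) * (theta ^ 2) ^ k'"
      unfolding Suc by (rule powdiff[OF x y]) simp
    also have "\<dots> \<le> nrm (L - P) * (theta ^ 2) ^ k'" by (rule mult_right_mono[OF d]) simp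
    finally show "nrm ((c * L) ^ k - (c * P) ^ k) \<le> nrm (L - P) * (theta ^ 2) ^ k'" .
  qed (use nfact_lower theta_pos in auto)
  also have "\<dots> = nrm (L - P) * theta ^ k' / theta" unfolding Suc using theta_pos
    by (simp add: power2_eq_square power_mult_distrib field_simps)
  also have "\<dots> \<le> nrm (L - P) / theta"
  proof -
    have "nrm (L - P) * theta ^ k' \<le> nrm (L - P)"
      by (rule mult_right_le_one_le) (use theta_pos theta_le1 in \<open>auto simp: power_le_one\<close>)
    thus ?thesis using theta_pos by (simp add: divide_right_mono)
  qed
  finally show ?thesis .
qed

end

context K5 begin

definition "dd c N = (\<Sum>k<N. smult (c ^ k / of_nat (fact k)) (qq N ^ k))"

lemma poly_dd: "poly (dd c N) (yy - 1) = (\<Sum>k<N. (c * (\<Sum>m<N. log_term yy m)) ^ k / fact k)"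
  unfolding dd_def poly_sum poly_smult poly_power poly_qq
  by (intro sum.cong refl) (simp add: power_mult_distrib)

lemma fps_dd: "fps_of_poly (dd c N) = (\<Sum>k<N. fps_const (c ^ k / of_nat (fact k)) * fps_of_poly (qq N) ^ k)"
  unfolding dd_def fps_of_poly_sum fps_of_poly_smult fps_of_poly_power ..

lemma gb_dd: assumes "nrm c \<le> 1" shows "gb (fps_of_poly (dd c N)) 1"
  unfolding fps_dd
  by (rule gb_sum) (use gb_term[OF assms gb_power[OF gb_qq]] theta_pos in auto)

lemma coeff_dd: assumes "j < N" shows "coeff (dd c N) j = GG c $ j"
proof -
  have "coeff (dd c N) j = fps_of_poly (dd c N) $ j" by simp
  also have "\<dots> = (\<Sum>k<N. c ^ k / of_nat (fact k) * (AA ^ k) $ j)"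
    unfolding fps_dd fps_sum_nth using assms
    by (intro sum.cong refl) (simp add: agree_power[OF qq_agree, of j N])
  also have "\<dots> = (\<Sum>k\<in>{0..j}. c ^ k / of_nat (fact k) * (AA ^ k) $ j)"
    by (rule sum.mono_neutral_right) (use assms AA_power_low in auto)
  also have "\<dots> = GG c $ j" unfolding GG_def fps_compose_nth by simp
  finally show ?thesis .
qed

lemma poly_as_sum: fixes p :: "'k poly" assumes "degree p < M" shows "poly p x = (\<Sum>j<M. coeff p j * x ^ j)"
proof -
  have "poly p x = (\<Sum>j\<le>degree p. coeff p j * x ^ j)" by (rule poly_altdef)
  also have "\<dots> = (\<Sum>j<M. coeff p j * x ^ j)"
    by (rule sum.mono_neutral_left) (use assms in \<open>auto simp: coeff_eq_0\<close>)
  finally show ?thesis .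
qed

lemma main_exp: assumes c: "nrm c \<le> 1" and e: "Ksums nrm (\<lambda>k. (c * LL) ^ k / fact k) e"
  shows "Ksums nrm (\<lambda>j. GG c $ j * (yy - 1) ^ j) e"
proof -
  define z where "z = yy - 1"
  have z: "nrm z \<le> theta ^ 2" unfolding z_def by (rule zz_norm)
  define P where "P N = (\<Sum>m<N. log_term yy m)" for N
  define E where "E N = (\<Sum>k<N. (c * LL) ^ k / fact k)" for N
  define D where "D N = (\<Sum>k<N. (c * P N) ^ k / fact k)" for N
  define T where "T N = (\<Sum>j<N. GG c $ j * z ^ j)" for N
  have DT: "nrm (D N - T N) \<le> theta ^ N" for N
  proof -
    define M where "M = N + Suc (degree (dd c N))"
    have "D N = (\<Sum>j<M. coeff (dd c N) j * z ^ j)"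
      unfolding D_def P_def z_def poly_dd[symmetric] M_def by (rule poly_as_sum) simp
    also have "\<dots> = (\<Sum>j<N. coeff (dd c N) j * z ^ j) + (\<Sum>j\<in>{N..<M}. coeff (dd c N) j * z ^ j)"
    proof -
      have u: "{..<M} = {..<N} \<union> {N..<M}" unfolding M_def by auto
      show ?thesis unfolding u by (rule sum.union_disjoint) auto
    qed
    also have "(\<Sum>j<N. coeff (dd c N) j * z ^ j) = T N"
      unfolding T_def by (intro sum.cong refl) (simp add: coeff_dd)
    finally have "D N - T N = (\<Sum>j\<in>{N..<M}. coeff (dd c N) j * z ^ j)" by simp
    also have "nrm \<dots> \<le> theta ^ N"
    proof (rule nsum_le)
      fix j assume j: "j \<in> {N..<M}"
      have "nrm (fps_of_poly (dd c N) $ j * z ^ j) \<le> theta ^ j" by (rule gterm_bound[OF gb_dd[OF c] z])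
      moreover have "theta ^ j \<le> theta ^ N" using j theta_pos theta_le1 by (intro power_decreasing) auto
      ultimately show "nrm (coeff (dd c N) j * z ^ j) \<le> theta ^ N" by simp
    qed (use theta_pos in auto)
    finally show ?thesis .
  qed
  have ED: "nrm (E N - D N) \<le> nrm (LL - P N) / theta" for N
  proof -
    have "E N - D N = (\<Sum>k<N. (c * LL) ^ k / fact k - (c * P N) ^ k / fact k)"
      unfolding E_def D_def by (simp add: sum_subtractf)
    also have "nrm \<dots> \<le> nrm (LL - P N) / theta"
      by (rule nsum_le) (use exp_diff_term[OF c LL_norm partial_log_norm[of N, folded P_def]] theta_pos in auto)
    finally show ?thesis .
  qed
  have PL: "(\<lambda>N. nrm (LL - P N)) \<longlonglongrightarrow> 0"
  proof -
    have "(\<lambda>N. nrm (P N - LL)) \<longlonglongrightarrow> 0" using LL_sums unfolding Ksums_def Kconv_iff P_def .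
    moreover have "nrm (P N - LL) = nrm (LL - P N)" for N by (rule ndiff_comm)
    ultimately show ?thesis by simp
  qed
  have "Kconv nrm E e" using e unfolding Ksums_def E_def .
  hence "Kconv nrm T e"
  proof (rule Kconv_close)
    show "(\<lambda>N. nrm (T N - E N)) \<longlonglongrightarrow> 0"
    proof (rule null_cmp[of _ "\<lambda>N. nrm (LL - P N) / theta + theta ^ N"])
      show "\<forall>\<^sub>F N in sequentially. nrm (T N - E N) \<le> nrm (LL - P N) / theta + theta ^ N"
      proof (rule always_eventually, rule allI)
        fix N
        have "T N - E N = - ((E N - D N) + (D N - T N))" by simp
        hence "nrm (T N - E N) = nrm ((E N - D N) + (D N - T N))" by (simp only: nminus)
        also have "\<dots> \<le> nrm (E N - D N) + nrm (D N - T N)" by (rule ntri)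
        finally show "nrm (T N - E N) \<le> nrm (LL - P N) / theta + theta ^ N" using ED[of N] DT[of N] by linarith
      qed
      show "(\<lambda>N. nrm (LL - P N) / theta + theta ^ N) \<longlonglongrightarrow> 0"
        using tendsto_add[OF tendsto_divide[OF PL tendsto_const] LIMSEQ_power_zero[of theta]] theta_pos theta_lt1
        by simp
    qed simp
  qed
  thus ?thesis unfolding Ksums_def T_def z_def .
qed

end

context K5 begin

lemma fsum_one: "Ksums nrm (\<lambda>j. (1::'k fps) $ j * z ^ j) 1"
  unfolding Ksums_def
proof (rule Kconv_bound_ev[of _ _ "\<lambda>_. 0"])
  show "\<forall>\<^sub>F N in sequentially. nrm ((\<Sum>j<N. (1::'k fps) $ j * z ^ j) - 1) \<le> 0"
  proof (rule eventually_sequentiallyI[of 1])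
    fix N :: nat assume "1 \<le> N"
    hence "(\<Sum>j<N. (1::'k fps) $ j * z ^ j) = (\<Sum>j\<in>{0}. (1::'k fps) $ j * z ^ j)"
      by (intro sum.mono_neutral_right) auto
    thus "nrm ((\<Sum>j<N. (1::'k fps) $ j * z ^ j) - 1) \<le> 0" by simp
  qed
qed simp

lemma fsum_G1: "Ksums nrm (\<lambda>j. (1 + fps_X :: 'k fps) $ j * z ^ j) (1 + z)"
  unfolding Ksums_def
proof (rule Kconv_bound_ev[of _ _ "\<lambda>_. 0"])
  show "\<forall>\<^sub>F N in sequentially. nrm ((\<Sum>j<N. (1 + fps_X :: 'k fps) $ j * z ^ j) - (1 + z)) \<le> 0"
  proof (rule eventually_sequentiallyI[of 2])
    fix N :: nat assume "2 \<le> N"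
    hence "(\<Sum>j<N. (1 + fps_X :: 'k fps) $ j * z ^ j) = (\<Sum>j\<in>{0, 1}. (1 + fps_X :: 'k fps) $ j * z ^ j)"
      by (intro sum.mono_neutral_right) auto
    thus "nrm ((\<Sum>j<N. (1 + fps_X :: 'k fps) $ j * z ^ j) - (1 + z)) \<le> 0" by simp
  qed
qed simp

lemma nrm_cLL: "nrm c \<le> 1 \<Longrightarrow> nrm (c * LL) \<le> theta ^ 2"
proof -
  assume "nrm c \<le> 1"
  hence "nrm c * nrm LL \<le> 1 * theta ^ 2" by (intro mult_mono) (use LL_norm in auto)
  thus ?thesis by (simp add: nmult)
qed

lemma exp_val: assumes "nrm c \<le> 1" "Ksums nrm (\<lambda>j. GG c $ j * (yy - 1) ^ j) v"
  shows "Ksums nrm (\<lambda>k. (c * LL) ^ k / fact k) v"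
proof -
  obtain e where e: "Ksums nrm (\<lambda>k. (c * LL) ^ k / fact k) e" using exp_conv[OF nrm_cLL[OF assms(1)]] by blast
  have "e = v" using main_exp[OF assms(1) e] assms(2) by (rule Ksums_unique)
  thus ?thesis using e by simp
qed

lemma GG_nat: "Ksums nrm (\<lambda>j. GG (of_nat n) $ j * (yy - 1) ^ j) (yy ^ n)"
proof (induct n)
  case 0 show ?case using fsum_one[of "yy - 1"] by (simp add: GG_0)
next
  case (Suc n)
  have "GG (of_nat (Suc n)) = GG (of_nat n) * GG 1" by (simp add: GG_add[symmetric] add.commute)
  moreover have "Ksums nrm (\<lambda>j. (GG (of_nat n) * GG 1) $ j * (yy - 1) ^ j) (yy ^ n * (1 + (yy - 1)))"
    by (rule fsum_mult[OF gb_GG gb_GG zz_norm Suc]) (use fsum_G1[of "yy - 1"] nnat_le1 in \<open>simp_all add: GG_1\<close>)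
  ultimately show ?case by (simp add: mult.commute)
qed

lemma norm_neg_nat: "nrm (- of_nat n :: 'k) \<le> 1" using nnat_le1 by simp

lemma exp_pos: "Ksums nrm (\<lambda>k. (of_nat n * LL) ^ k / fact k) (yy ^ n)"
  by (rule exp_val[OF nnat_le1 GG_nat])

lemma exp_neg: "Ksums nrm (\<lambda>k. (- (of_nat n * LL)) ^ k / fact k) (inverse (yy ^ n))"
proof -
  let ?c = "- of_nat n :: 'k"
  obtain e where e: "Ksums nrm (\<lambda>k. (?c * LL) ^ k / fact k) e" using exp_conv[OF nrm_cLL[OF norm_neg_nat]] by blast
  have g: "Ksums nrm (\<lambda>j. GG ?c $ j * (yy - 1) ^ j) e" by (rule main_exp[OF norm_neg_nat e])
  have "Ksums nrm (\<lambda>j. (GG ?c * GG (of_nat n)) $ j * (yy - 1) ^ j) (e * yy ^ n)"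
    by (rule fsum_mult[OF gb_GG[OF norm_neg_nat] gb_GG[OF nnat_le1] zz_norm g GG_nat])
  moreover have "GG ?c * GG (of_nat n) = 1" by (simp add: GG_add[symmetric] GG_0)
  ultimately have "Ksums nrm (\<lambda>j. (1::'k fps) $ j * (yy - 1) ^ j) (e * yy ^ n)" by simp
  hence "e * yy ^ n = 1" using fsum_one Ksums_unique by blast
  hence "e = inverse (yy ^ n)" using yy_nz by (simp add: field_simps)
  thus ?thesis using e by simp
qed

lemma sinh_partial: "(\<Sum>k<2 * M. w ^ k / fact k) - (\<Sum>k<2 * M. (- w) ^ k / fact k) = 2 * (\<Sum>m<M. sinh_term w m)"
proof (induct M)
  case (Suc M)
  have e: "2 * Suc M = Suc (Suc (2 * M))" by simp
  have a: "(- w) ^ (2 * M) = w ^ (2 * M)" by (simp add: power_mult)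
  have b: "(- w) ^ Suc (2 * M) = - (w ^ Suc (2 * M))" by (simp add: power_mult)
  show ?case unfolding e using Suc a b by (simp add: sinh_term_def algebra_simps)
qed simp

lemma sinh_from_exp: assumes "Ksums nrm (\<lambda>k. w ^ k / fact k) e1" "Ksums nrm (\<lambda>k. (- w) ^ k / fact k) e2"
  shows "Ksums nrm (sinh_term w) ((e1 - e2) / 2)"
proof -
  have sm: "strict_mono (\<lambda>M::nat. 2 * M)" by (rule strict_monoI) simp
  have "Kconv nrm (\<lambda>M. ((\<Sum>k<2 * M. w ^ k / fact k) - (\<Sum>k<2 * M. (- w) ^ k / fact k)) * (1/2)) ((e1 - e2) * (1/2))"
    by (intro Kconv_mult Kconv_diff Kconv_const Kconv_subseq[OF _ sm]) (use assms in \<open>simp_all add: Ksums_def\<close>)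
  thus ?thesis unfolding Ksums_def sinh_partial by simp
qed

lemma Z5_norm: "x \<in> Z5 nrm \<Longrightarrow> nrm x \<le> 1"
  unfolding Z5_def using Kconv_norm_le nint_le1 by blast

lemma binet: "of_nat (fib n) * sq5 = phi ^ n - (1 - phi) ^ n"
proof (induct n rule: fib.induct)
  case 1 show ?case by simp
next
  case 2 show ?case by (simp add: sq5_def)
next
  case (3 n)
  have gen: "x ^ Suc (Suc n) = x ^ Suc n + x ^ n" if "x ^ 2 = x + 1" for x :: 'k
  proof -
    have "x ^ Suc (Suc n) = x ^ n * x ^ 2" by (simp add: power2_eq_square algebra_simps)
    also have "\<dots> = x ^ n * (x + 1)" using that by simp
    finally show ?thesis by (simp add: algebra_simps)
  qed
  have p: "phi ^ Suc (Suc n) = phi ^ Suc n + phi ^ n" by (rule gen[OF phi2])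
  have q: "(1 - phi) ^ Suc (Suc n) = (1 - phi) ^ Suc n + (1 - phi) ^ n"
  proof (rule gen)
    show "(1 - phi) ^ 2 = (1 - phi) + 1" using phi2 by (simp add: algebra_simps power2_eq_square)
  qed
  have aux: "\<And>x2 x1 x0 y2 y1 y0 :: 'k. x2 = x1 + x0 \<Longrightarrow> y2 = y1 + y0 \<Longrightarrow> (x1 - y1) + (x0 - y0) = x2 - y2"
    by simp
  have "of_nat (fib (Suc (Suc n))) * sq5 = of_nat (fib (Suc n)) * sq5 + of_nat (fib n) * sq5"
    by (simp add: distrib_right)
  also have "\<dots> = (phi ^ Suc n - (1 - phi) ^ Suc n) + (phi ^ n - (1 - phi) ^ n)" using 3 by simp
  also have "\<dots> = phi ^ Suc (Suc n) - (1 - phi) ^ Suc (Suc n)" by (rule aux[OF p q])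
  finally show ?case .
qed

lemma field_aux: fixes s W A B :: 'k assumes "s \<noteq> 0" "W \<noteq> 0"
  shows "2 / s * ((A / W - B / W) / 2) = (A - B) / (s * W)"
  using assms by (simp add: field_simps)

lemma final_identity:
  "(2 / sq5) * ((yy ^ n - inverse (yy ^ n)) / 2) = of_nat (fib n) / omega3 nrm ^ n"
proof -
  let ?w = "omega3 nrm"
  have sq5nz: "sq5 \<noteq> 0" using sq5_norm theta_pos by auto
  have phinz: "phi \<noteq> 0" using yy_nz unfolding yy_def by auto
  have wnz: "?w \<noteq> 0" by (rule omega_nz)
  have wn: "?w ^ n \<noteq> 0" using wnz by simp
  have pp: "phi * (1 - phi) = ?w ^ 2" using phi2 omega_sq' by (simp add: algebra_simps power2_eq_square)
  have yn: "yy ^ n = phi ^ n / ?w ^ n" unfolding yy_def by (rule power_divide)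
  have inv: "inverse (yy ^ n) = (1 - phi) ^ n / ?w ^ n"
  proof (rule inverse_unique)
    have "yy ^ n * ((1 - phi) ^ n / ?w ^ n) = (phi * (1 - phi)) ^ n / (?w ^ n * ?w ^ n)"
      unfolding yn by (simp add: power_mult_distrib)
    also have "\<dots> = (?w ^ n * ?w ^ n) / (?w ^ n * ?w ^ n)"
      unfolding pp by (simp add: power2_eq_square power_mult_distrib)
    also have "\<dots> = 1" using wn by simp
    finally show "yy ^ n * ((1 - phi) ^ n / ?w ^ n) = 1" .
  qed
  have "(2 / sq5) * ((yy ^ n - inverse (yy ^ n)) / 2) = (phi ^ n - (1 - phi) ^ n) / (sq5 * ?w ^ n)"
    unfolding inv unfolding yn by (rule field_aux[OF sq5nz wn])
  also have "\<dots> = (of_nat (fib n) * sq5) / (sq5 * ?w ^ n)" by (simp only: binet)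
  also have "\<dots> = of_nat (fib n) / ?w ^ n" using sq5nz by simp
  finally show ?thesis .
qed

lemma sinh_nat: "sinh5 nrm (of_nat n * LL) = (yy ^ n - inverse (yy ^ n)) / 2"
proof -
  have s: "Ksums nrm (sinh_term (of_nat n * LL)) ((yy ^ n - inverse (yy ^ n)) / 2)"
    by (rule sinh_from_exp[OF exp_pos exp_neg])
  hence "\<exists>!l. Ksums nrm (sinh_term (of_nat n * LL)) l" using Ksums_unique by blast
  hence "Ksums nrm (sinh_term (of_nat n * LL)) (sinh5 nrm (of_nat n * LL))"
    unfolding sinh5_def by (rule theI')
  thus ?thesis using s Ksums_unique by blast
qed

lemma sinh_Z5: assumes "x \<in> Z5 nrm" shows "\<exists>l. Ksums nrm (sinh_term (x * LL)) l"
proof -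
  have n: "nrm (x * LL) \<le> theta ^ 2" by (rule nrm_cLL[OF Z5_norm[OF assms]])
  obtain e1 where "Ksums nrm (\<lambda>k. (x * LL) ^ k / fact k) e1" using exp_conv[OF n] by blast
  moreover obtain e2 where "Ksums nrm (\<lambda>k. (- (x * LL)) ^ k / fact k) e2" using exp_conv[of "- (x * LL)"] n by auto
  ultimately show ?thesis using sinh_from_exp by blast
qed

end


theorem corollary5p3:
  fixes nrm :: "'k::field_char_0 \<Rightarrow> real" and phi :: 'k
  assumes K: "is_K5 nrm phi"
  defines "sqrt5 \<equiv> 2 * phi - 1"
    and "\<omega> \<equiv> omega3 nrm"
    and "L \<equiv> log5 nrm (phi / omega3 nrm)"
  shows "(\<exists>l. Ksums nrm (log_term (phi / \<omega>)) l)
    \<and> (\<forall>x \<in> Z5 nrm. \<exists>l. Ksums nrm (sinh_term (x * L)) l)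
    \<and> (\<forall>n::nat. (2 / sqrt5) * sinh5 nrm (of_nat n * L) = of_nat (fib n) / \<omega> ^ n)"
proof -
  interpret K5 nrm phi by unfold_locales (rule K)
  have s: "sqrt5 = sq5" unfolding sqrt5_def sq5_def ..
  have w: "\<omega> = omega3 nrm" unfolding \<omega>_def ..
  have l: "L = LL" unfolding L_def LL_def yy_def ..
  have p1: "\<exists>l. Ksums nrm (log_term (phi / \<omega>)) l" using log_conv unfolding yy_def w .
  have p2: "\<forall>x \<in> Z5 nrm. \<exists>l. Ksums nrm (sinh_term (x * L)) l" unfolding l using sinh_Z5 by blast
  have p3: "\<forall>n::nat. (2 / sqrt5) * sinh5 nrm (of_nat n * L) = of_nat (fib n) / \<omega> ^ n"
    unfolding s w l sinh_nat using final_identity by blast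
  show ?thesis using p1 p2 p3 by blast
qed

end
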